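(* For any $\varepsilon,\alpha\in(0,1)$ and any $\beta>0$, if $G=(V,E)$ is a finite graph and $\mathcal{P}'$ is a partition of $V$, then there exists an $(\varepsilon,\alpha,\beta)$-good coarsening of $\mathcal{P}'$.
   Context: A partition $\mathcal{P}$ is a coarsening of $\mathcal{P}'$ if every set of $\mathcal{P}$ is a union of sets of $\mathcal{P}'$. Let $\mathcal{P}'$ be $V=V'_1\sqcup\dots\sqcup V'_\ell$ and $\mathcal{P}$, given by $V=V_1\sqcup\dots\sqcup V_k$, a coarsening of it; for $i\in[k]$, $\mathcal{P}_i$ is the partition of $V_i$ into sets of $\mathcal{P}'$. For a partition $\mathcal{Q}$ of a vertex set into sets $U_1,\dots,U_m$ and $c>0$, $H(\mathcal{Q},c)$ is the graph on $[m]$ where $j\ne j'$ are adjacent iff $|E(U_j,U_{j'})|>c$, with $E(A,B)$ the set of edges of $G$ between $A$ and $B$. $\mathcal{P}$ is an $(\varepsilon,\alpha,\beta)$-good coarsening of $\mathcal{P}'$ if there exists $\theta\in\left[\varepsilon\left(\frac{\varepsilon\alpha}{\ell^2}\right)^{2^\ell},\varepsilon\right]$ such that (1) for every $i\in[k]$, $H(\mathcal{P}_i,\theta\beta)$ is connected; (2) for every $i\in[k]$, $|E(V_i,V\setminus V_i)|\le\theta^2\beta\alpha$. *)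

theory Defs
  imports Complex_Main "HOL-Library.Disjoint_Sets"
begin

definition finite_graph :: "'a set \<Rightarrow> 'a set set \<Rightarrow> bool" where
  "finite_graph V E \<longleftrightarrow> finite V \<and> (\<forall>e\<in>E. \<exists>x y. x \<in> V \<and> y \<in> V \<and> x \<noteq> y \<and> e = {x, y})"

definition edges_between :: "'a set set \<Rightarrow> 'a set \<Rightarrow> 'a set \<Rightarrow> 'a set set" where
  "edges_between E A B = {e \<in> E. \<exists>a\<in>A. \<exists>b\<in>B. e = {a, b}}"

definition coarsening :: "'a set \<Rightarrow> 'a set set \<Rightarrow> 'a set set \<Rightarrow> bool" where
  "coarsening V P P' \<longleftrightarrow> partition_on V P \<and> partition_on V P' \<and>
     (\<forall>X\<in>P. \<exists>S. S \<subseteq> P' \<and> X = \<Union>S)"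

definition induced_part :: "'a set set \<Rightarrow> 'a set \<Rightarrow> 'a set set" where
  "induced_part P' X = {Y \<in> P'. Y \<subseteq> X}"

definition H_adj :: "'a set set \<Rightarrow> 'a set set \<Rightarrow> real \<Rightarrow> ('a set \<times> 'a set) set" where
  "H_adj E Q c = {(U, W). U \<in> Q \<and> W \<in> Q \<and> U \<noteq> W \<and> real (card (edges_between E U W)) > c}"

definition H_connected :: "'a set set \<Rightarrow> 'a set set \<Rightarrow> real \<Rightarrow> bool" where
  "H_connected E Q c \<longleftrightarrow> (\<forall>U\<in>Q. \<forall>W\<in>Q. (U, W) \<in> (H_adj E Q c)\<^sup>*)"

definition good_coarsening ::
  "real \<Rightarrow> real \<Rightarrow> real \<Rightarrow> 'a set \<Rightarrow> 'a set set \<Rightarrow> 'a set set \<Rightarrow> 'a set set \<Rightarrow> bool" where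
  "good_coarsening \<epsilon> \<alpha> \<beta> V E P P' \<longleftrightarrow> coarsening V P P' \<and>
     (\<exists>\<theta>::real. \<epsilon> * (\<epsilon> * \<alpha> / (real (card P'))\<^sup>2) ^ (2 ^ card P') \<le> \<theta> \<and> \<theta> \<le> \<epsilon> \<and>
        (\<forall>X\<in>P. H_connected E (induced_part P' X) (\<theta> * \<beta>)) \<and>
        (\<forall>X\<in>P. real (card (edges_between E X (V - X))) \<le> \<theta>\<^sup>2 * \<beta> * \<alpha>))"

end

theory Submission
  imports Defs
begin

fun thseq :: "real \<Rightarrow> real \<Rightarrow> nat \<Rightarrow> real" where
  "thseq e c 0 = e"
| "thseq e c (Suc j) = (thseq e c j)\<^sup>2 * c"

lemma aux_arith: "1 \<le> (x::nat) \<Longrightarrow> 2*x - 1 = Suc (2*(x-1))" by arith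

lemma thseq_props:
  assumes "0 < e" "e \<le> 1" "0 < c" "c \<le> 1"
  shows "0 < thseq e c j \<and> thseq e c j \<le> e \<and> e * (e * c) ^ (2 ^ j - 1) \<le> thseq e c j"
proof (induction j)
  case 0
  then show ?case using assms by simp
next
  case (Suc j)
  let ?t = "thseq e c j"
  have pos: "0 < ?t" and le: "?t \<le> e" and lb: "e * (e * c) ^ (2 ^ j - 1) \<le> ?t" using Suc by auto
  have "?t\<^sup>2 * c \<le> ?t * c" using pos le assms
    by (simp add: power2_eq_square mult_right_mono mult_le_cancel_left1)
  also have "\<dots> \<le> e" using pos le assms by (simp add: mult_le_one order_trans[OF mult_left_le])
  finally have a: "?t\<^sup>2 * c \<le> e" .
  define m :: nat where "m = 2 ^ j - 1"
  have m2: "2 ^ Suc j - 1 = 2 * m + 1"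
  proof -
    have "(1::nat) \<le> 2 ^ j" by simp
    then show ?thesis unfolding m_def using aux_arith[of "2^j"] by simp
  qed
  have "e * (e * c) ^ (2 ^ Suc j - 1) = (e * (e * c) ^ m)\<^sup>2 * c"
    unfolding m2 by (simp add: power_add power_mult_distrib power2_eq_square power_mult algebra_simps)
  also have "\<dots> \<le> ?t\<^sup>2 * c"
    using lb assms m_def by (intro mult_right_mono power_mono) auto
  finally show ?case using pos assms a by simp
qed

lemma edges_between_sym: "edges_between E U W = edges_between E W U"
  by (auto simp: edges_between_def insert_commute)

lemma H_adj_sym: "sym (H_adj E Q c)"
  by (auto simp: H_adj_def sym_def edges_between_sym)

lemma H_adj_sub: "H_adj E Q c \<subseteq> Q \<times> Q"
  by (auto simp: H_adj_def)

lemma H_adj_mono: "c' \<le> c \<Longrightarrow> H_adj E Q c \<subseteq> H_adj E Q c'"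
  by (auto simp: H_adj_def)

definition compRel :: "'a set set \<Rightarrow> 'a set set \<Rightarrow> real \<Rightarrow> ('a set \<times> 'a set) set" where
  "compRel E Q c = {(U, W). U \<in> Q \<and> W \<in> Q \<and> (U, W) \<in> (H_adj E Q c)\<^sup>*}"

lemma equiv_compRel: "equiv Q (compRel E Q c)"
proof (rule equivI)
 show "compRel E Q c \<subseteq> Q \<times> Q" by (auto simp: compRel_def)
  show "refl_on Q (compRel E Q c)" by (auto simp: refl_on_def compRel_def)
  show "sym (compRel E Q c)"
    using sym_rtrancl[OF H_adj_sym[of E Q c]] by (auto simp: sym_def compRel_def)
  show "trans (compRel E Q c)"
    by (auto simp: trans_def compRel_def)
qed

lemma compRel_mono: "c' \<le> c \<Longrightarrow> compRel E Q c \<subseteq> compRel E Q c'"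
  using rtrancl_mono[OF H_adj_mono[of c' c E Q]] by (auto simp: compRel_def)

lemma H_adj_compRel: "H_adj E Q c \<subseteq> compRel E Q c"
  using H_adj_sub[of E Q c] by (auto simp: compRel_def)

lemma quotient_card_less:
  assumes fin: "finite A" and eR: "equiv A R" and eS: "equiv A S" and sub: "R \<subseteq> S" and ne: "R \<noteq> S"
  shows "card (A//S) < card (A//R)"
proof -
  define h where "h X = S `` X" for X
  have hS: "h (R``{a}) = S``{a}" if "a \<in> A" for a
  proof
    show "h (R``{a}) \<subseteq> S``{a}" using sub eS unfolding h_def equiv_def trans_def by blast
    show "S``{a} \<subseteq> h (R``{a})" using that eR unfolding h_def equiv_def refl_on_def by blast
  qed
  have img: "h ` (A//R) = A//S"
    unfolding quotient_def using hS by auto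
  have "\<exists>p. p \<in> S \<and> p \<notin> R" using sub ne by blast
  then obtain a b where ab: "(a, b) \<in> S" "(a, b) \<notin> R" by auto
  have abA: "a \<in> A" "b \<in> A" using ab eS by (auto dest: equiv_type)
  have "R``{a} \<noteq> R``{b}" using eq_equiv_class_iff[OF eR abA] ab by simp
  moreover have "h (R``{a}) = h (R``{b})"
  proof -
    have "h (R``{a}) = S``{a}" "h (R``{b}) = S``{b}"
      using abA hS by auto
    then show ?thesis using eq_equiv_class_iff[OF eS abA] ab by simp
  qed
  moreover have "R``{a} \<in> A//R" "R``{b} \<in> A//R" using abA by (auto intro: quotientI)
  ultimately have "\<not> inj_on h (A//R)" unfolding inj_on_def by blast
  moreover have finq: "finite (A//R)" using finite_quotient[OF fin] eR by (auto dest: equiv_type)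
  ultimately have "card (h ` (A//R)) \<noteq> card (A//R)" using inj_on_iff_eq_card by blast
  moreover have "card (h ` (A//R)) \<le> card (A//R)" using finq by (rule card_image_le)
  ultimately show ?thesis using img by simp
qed

lemma card_quotient_bounds:
  assumes "finite A" "A \<noteq> {}" "equiv A R"
  shows "1 \<le> card (A//R) \<and> card (A//R) \<le> card A"
proof -
  have q: "A//R = (\<lambda>a. R``{a}) ` A" unfolding quotient_def by auto
  have "card (A//R) \<le> card A" unfolding q using assms(1) by (rule card_image_le)
  moreover have "A//R \<noteq> {}" using q assms(2) by auto
  moreover have "finite (A//R)" using q assms(1) by simp
  ultimately show ?thesis by (simp add: Suc_le_eq card_gt_0_iff)
qed

lemma rtrancl_restrict:
  assumes "(x, y) \<in> r\<^sup>*" "x \<in> C" "\<And>a b. (a, b) \<in> r \<Longrightarrow> a \<in> C \<Longrightarrow> b \<in> C"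
  shows "(x, y) \<in> (r \<inter> C \<times> C)\<^sup>* \<and> y \<in> C"
  using assms(1)
proof (induction rule: rtrancl_induct)
  case base
  then show ?case using assms(2) by simp
next
  case (step y z)
  then have "z \<in> C" using assms(3) by blast
  then show ?case using step by (meson IntI mem_Sigma_iff rtrancl.rtrancl_into_rtrancl)
qed

theorem lemma2p13:
  fixes \<epsilon> \<alpha> \<beta> :: real and V :: "'a set" and E :: "'a set set" and P' :: "'a set set"
  assumes "0 < \<epsilon>" "\<epsilon> < 1" "0 < \<alpha>" "\<alpha> < 1" "0 < \<beta>"
    and "finite_graph V E"
    and "partition_on V P'"
  shows "\<exists>P. good_coarsening \<epsilon> \<alpha> \<beta> V E P P'"
proof -
  note eps = assms(1,2) and alp = assms(3,4) and bet = assms(5)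
  note part = assms(7)
  have finV: "finite V" using assms(6) by (simp add: finite_graph_def)
  have UP': "\<Union>P' = V" and disjP': "disjoint P'" and neP': "{} \<notin> P'"
    using part by (auto simp: partition_on_def)
  have finP': "finite P'" using finV UP' by (metis finite_UnionD)
  have finE: "finite E"
  proof -
    have "E \<subseteq> Pow V" using assms(6) by (auto simp: finite_graph_def)
    then show ?thesis using finV by (meson finite_Pow_iff finite_subset)
  qed
  show ?thesis
  proof (cases "P' = {}")
    case True
    then have "V = {}" using UP' by simp
    then have "good_coarsening \<epsilon> \<alpha> \<beta> V E {} P'"
      using True eps unfolding good_coarsening_def coarsening_def
      by (auto simp: partition_on_def intro!: exI[of _ \<epsilon>])
    then show ?thesis by blast
  next
    case False
    define l where "l = card P'"
    have l1: "1 \<le> l" using False finP' l_def by (simp add: Suc_le_eq card_gt_0_iff)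
    define c where "c = \<alpha> / (real l)\<^sup>2"
    have c0: "0 < c" using alp l1 by (simp add: c_def)
    have c1: "c \<le> 1"
    proof -
      have "(1::real) \<le> (real l)\<^sup>2" using l1 by simp
      then show ?thesis using alp unfolding c_def by (simp add: divide_le_eq)
    qed
    define th where "th j = thseq \<epsilon> c j" for j
    have thp: "0 < th j \<and> th j \<le> \<epsilon> \<and> \<epsilon> * (\<epsilon> * c) ^ (2 ^ j - 1) \<le> th j" for j
      unfolding th_def using thseq_props[of \<epsilon> c j] eps c0 c1 by simp
    have thdec: "th (Suc j) \<le> th j" for j
    proof -
      have "th (Suc j) = th j * th j * c" by (simp add: th_def power2_eq_square)
      also have "\<dots> \<le> th j * 1 * 1"
        using thp[of j] eps c0 c1 by (intro mult_mono) auto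
      finally show ?thesis by simp
    qed
    define R where "R j = compRel E P' (th j * \<beta>)" for j
    have eqR: "equiv P' (R j)" for j unfolding R_def by (rule equiv_compRel)
    have monoR: "R j \<subseteq> R (Suc j)" for j
      unfolding R_def using thdec[of j] bet by (intro compRel_mono) simp
    have count: "(\<forall>i<j. R i \<noteq> R (Suc i)) \<longrightarrow> card (P'//R j) + j \<le> l" for j
    proof (induction j)
      case 0
      then show ?case using card_quotient_bounds[OF finP' False eqR[of 0]] l_def by simp
    next
      case (Suc j)
      show ?case
      proof
        assume h: "\<forall>i<Suc j. R i \<noteq> R (Suc i)"
        then have "card (P'//R j) + j \<le> l" using Suc by auto
        moreover have "card (P'//R (Suc j)) < card (P'//R j)"
          using quotient_card_less[OF finP' eqR eqR monoR] h by auto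
        ultimately show "card (P'//R (Suc j)) + Suc j \<le> l" by simp
      qed
    qed
    obtain j where jl: "j < l" and Rj: "R j = R (Suc j)"
    proof (rule ccontr)
      assume "\<not> thesis"
      with that have "\<forall>i<l. R i \<noteq> R (Suc i)" by blast
      then have "card (P'//R l) + l \<le> l" using count by blast
      moreover have "1 \<le> card (P'//R l)" using card_quotient_bounds[OF finP' False eqR[of l]] by simp
      ultimately show False by simp
    qed
    define \<theta> where "\<theta> = th j"
    define P where "P = Union ` (P'//R j)"
    have Csub: "C \<subseteq> P'" if "C \<in> P'//R j" for C using in_quotient_imp_subset[OF eqR that] .
    have Cclosed: "Z \<in> C" if "C \<in> P'//R j" "Y \<in> C" "(Y, Z) \<in> R j" for C Y Z
      using in_quotient_imp_closed[OF eqR that] .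
    have Cne: "C \<noteq> {}" if "C \<in> P'//R j" for C
      using that eqR[of j] unfolding quotient_def equiv_def refl_on_def by blast
    have blocks_eq: "Y = Z" if "Y \<in> P'" "Z \<in> P'" "a \<in> Y" "a \<in> Z" for Y Z a
      using disjP' that by (meson disjointD disjoint_iff)
    have ind: "induced_part P' (\<Union>C) = C" if C: "C \<in> P'//R j" for C
    proof
      show "C \<subseteq> induced_part P' (\<Union>C)" using Csub[OF C] by (auto simp: induced_part_def)
      show "induced_part P' (\<Union>C) \<subseteq> C"
      proof
        fix Y assume "Y \<in> induced_part P' (\<Union>C)"
        then have Y: "Y \<in> P'" "Y \<subseteq> \<Union>C" by (auto simp: induced_part_def)
        have "Y \<noteq> {}" using Y(1) neP' by auto
        then obtain a where "a \<in> Y" by blast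
        then obtain Z where "Z \<in> C" "a \<in> Z" using Y by blast
        then have "Y = Z" using blocks_eq[OF Y(1) _ \<open>a \<in> Y\<close>] Csub[OF C] by blast
        then show "Y \<in> C" using \<open>Z \<in> C\<close> by simp
      qed
    qed
    have partP: "partition_on V P"
      unfolding partition_on_def
    proof (intro conjI)
      show "\<Union>P = V" unfolding P_def using Union_quotient[OF eqR[of j]] UP' by auto
      show "{} \<notin> P"
      proof
        assume "{} \<in> P"
        then obtain C where C: "C \<in> P'//R j" "\<Union>C = {}" unfolding P_def by auto
        then obtain Y where "Y \<in> C" using Cne by blast
        then have "Y \<in> P'" "Y = {}" using C Csub by auto
        then show False using neP' by simp
      qed
      show "disjoint P"
        unfolding disjoint_def
      proof (intro ballI impI)
        fix X1 X2 assume X1: "X1 \<in> P" and X2: "X2 \<in> P" and ne: "X1 \<noteq> X2"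
        obtain C1 where C1: "C1 \<in> P'//R j" "X1 = \<Union>C1" using X1 unfolding P_def by auto
        obtain C2 where C2: "C2 \<in> P'//R j" "X2 = \<Union>C2" using X2 unfolding P_def by auto
        have "C1 \<inter> C2 = {}" using quotient_disj[OF eqR C1(1) C2(1)] ne C1 C2 by auto
        show "X1 \<inter> X2 = {}"
        proof (rule ccontr)
          assume "X1 \<inter> X2 \<noteq> {}"
          then obtain a Y1 Y2 where "a \<in> Y1" "Y1 \<in> C1" "a \<in> Y2" "Y2 \<in> C2" using C1 C2 by blast
          then have "Y1 = Y2" using blocks_eq Csub C1 C2 by blast
          then show False using \<open>C1 \<inter> C2 = {}\<close> \<open>Y1 \<in> C1\<close> \<open>Y2 \<in> C2\<close> by blast
        qed
      qed
    qed
    have coars: "coarsening V P P'"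
      unfolding coarsening_def using partP part Csub unfolding P_def by blast
    have lower: "\<epsilon> * (\<epsilon> * \<alpha> / (real (card P'))\<^sup>2) ^ (2 ^ card P') \<le> \<theta>"
    proof -
      have e: "\<epsilon> * \<alpha> / (real (card P'))\<^sup>2 = \<epsilon> * c" unfolding c_def l_def by simp
      have "(2::nat) ^ j \<le> 2 ^ l" using jl by simp
      then have "2 ^ j - 1 \<le> (2::nat) ^ l" by linarith
      moreover have "0 \<le> \<epsilon> * c" "\<epsilon> * c \<le> 1" using eps c0 c1 by (auto simp: mult_le_one)
      ultimately have "(\<epsilon> * c) ^ (2 ^ l) \<le> (\<epsilon> * c) ^ (2 ^ j - 1)"
        by (intro power_decreasing) auto
      then have "\<epsilon> * (\<epsilon> * c) ^ (2 ^ l) \<le> \<epsilon> * (\<epsilon> * c) ^ (2 ^ j - 1)"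
        using eps by simp
      then show ?thesis using thp[of j] unfolding e \<theta>_def l_def by linarith
    qed
    have conn: "H_connected E (induced_part P' X) (\<theta> * \<beta>)" if XP: "X \<in> P" for X
    proof -
      obtain C where C: "C \<in> P'//R j" "X = \<Union>C" using XP unfolding P_def by auto
      have "(U, W) \<in> (H_adj E C (\<theta> * \<beta>))\<^sup>*" if U: "U \<in> C" and W: "W \<in> C" for U W
      proof -
        have "(U, W) \<in> R j" using quotient_eq_iff[OF eqR C(1) C(1) U W] by simp
        then have "(U, W) \<in> (H_adj E P' (\<theta> * \<beta>))\<^sup>*" unfolding R_def compRel_def \<theta>_def by simp
        moreover have "\<And>a b. (a, b) \<in> H_adj E P' (\<theta> * \<beta>) \<Longrightarrow> a \<in> C \<Longrightarrow> b \<in> C"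
          using Cclosed[OF C(1)] H_adj_compRel unfolding R_def \<theta>_def by blast
        ultimately have "(U, W) \<in> (H_adj E P' (\<theta> * \<beta>) \<inter> C \<times> C)\<^sup>*"
          using rtrancl_restrict[of U W _ C] U by blast
        moreover have "H_adj E P' (\<theta> * \<beta>) \<inter> C \<times> C \<subseteq> H_adj E C (\<theta> * \<beta>)"
          by (auto simp: H_adj_def)
        ultimately show ?thesis using rtrancl_mono by blast
      qed
      then show ?thesis unfolding H_connected_def ind[OF C(1)] C(2) by blast
    qed
    have cut: "real (card (edges_between E X (V - X))) \<le> \<theta>\<^sup>2 * \<beta> * \<alpha>" if XP: "X \<in> P" for X
    proof -
      obtain C where C: "C \<in> P'//R j" and XC: "X = \<Union>C" using XP unfolding P_def by auto
      define I where "I = C \<times> (P' - C)"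
      have finI: "finite I" unfolding I_def using finP' Csub[OF C] by (meson finite_Diff finite_SigmaI finite_subset)
      have sub: "edges_between E X (V - X) \<subseteq> (\<Union>p\<in>I. edges_between E (fst p) (snd p))"
      proof
        fix e assume "e \<in> edges_between E X (V - X)"
        then obtain a b where e: "e \<in> E" "a \<in> X" "b \<in> V - X" "e = {a, b}"
          by (auto simp: edges_between_def)
        obtain Y where Y: "Y \<in> C" "a \<in> Y" using e(2) XC by blast
        obtain Z where Z: "Z \<in> P'" "b \<in> Z" using e(3) UP' by blast
        have "Z \<notin> C" using Z e(3) XC by blast
        then have "(Y, Z) \<in> I" unfolding I_def using Y Z by blast
        moreover have "e \<in> edges_between E Y Z" using e Y Z by (auto simp: edges_between_def)
        ultimately show "e \<in> (\<Union>p\<in>I. edges_between E (fst p) (snd p))" by force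
      qed
      have each: "real (card (edges_between E (fst p) (snd p))) \<le> th (Suc j) * \<beta>" if p: "p \<in> I" for p
      proof -
        obtain Y Z where YZ: "p = (Y, Z)" "Y \<in> C" "Z \<in> P'" "Z \<notin> C" using p unfolding I_def by auto
        have "(Y, Z) \<notin> H_adj E P' (th (Suc j) * \<beta>)"
        proof
          assume "(Y, Z) \<in> H_adj E P' (th (Suc j) * \<beta>)"
          then have "(Y, Z) \<in> R (Suc j)" using H_adj_compRel unfolding R_def by blast
          then have "(Y, Z) \<in> R j" using Rj by simp
          then show False using Cclosed[OF C YZ(2)] YZ(4) by blast
        qed
        moreover have "Y \<noteq> Z" "Y \<in> P'" using YZ Csub[OF C] by auto
        ultimately show ?thesis using YZ by (auto simp: H_adj_def)
      qed
      have cardI: "card I \<le> l * l"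
      proof -
        have "I \<subseteq> P' \<times> P'" unfolding I_def using Csub[OF C] by blast
        then have "card I \<le> card (P' \<times> P')" using finP' by (intro card_mono) auto
        then show ?thesis unfolding l_def by (simp add: card_cartesian_product)
      qed
      have finU: "finite (\<Union>p\<in>I. edges_between E (fst p) (snd p))"
        using finE by (rule finite_subset[rotated]) (auto simp: edges_between_def)
      have "real (card (edges_between E X (V - X))) \<le> real (card (\<Union>p\<in>I. edges_between E (fst p) (snd p)))"
        using card_mono[OF finU sub] by simp
      also have "\<dots> \<le> real (\<Sum>p\<in>I. card (edges_between E (fst p) (snd p)))"
        using card_UN_le[OF finI] by (simp only: of_nat_le_iff)
      also have "\<dots> = (\<Sum>p\<in>I. real (card (edges_between E (fst p) (snd p))))" by simp
      also have "\<dots> \<le> (\<Sum>p\<in>I. th (Suc j) * \<beta>)" using each by (rule sum_mono)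
      also have "\<dots> = real (card I) * (th (Suc j) * \<beta>)" by simp
      also have "\<dots> \<le> real (l * l) * (th (Suc j) * \<beta>)"
      proof (rule mult_right_mono)
        show "real (card I) \<le> real (l * l)" using cardI by (simp only: of_nat_le_iff)
        show "0 \<le> th (Suc j) * \<beta>" using thp[of "Suc j"] bet by simp
      qed
      also have "\<dots> = \<theta>\<^sup>2 * \<beta> * \<alpha>"
        using l1 unfolding \<theta>_def th_def c_def by (simp add: power2_eq_square field_simps)
      finally show ?thesis .
    qed
    have "good_coarsening \<epsilon> \<alpha> \<beta> V E P P'"
      unfolding good_coarsening_def
      using coars lower thp[of j] conn cut unfolding \<theta>_def by blast
    then show ?thesis by blast
  qed
qed

end
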